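(* Let $d,p\ge1$ and, for $i=1,\dots,p$, let $\kappa_i>0$, $\alpha_i>d/2$ and $\mathcal{L}_i=(\kappa_i^2-\Delta)^{\alpha_i/2}$. For a real invertible $p\times p$ matrix $\mathbf{D}$, let $\mathbf{x}_{\mathbf{D}}$ denote a multivariate Matérn-SPDE field with dependence matrix $\mathbf{D}$, i.e. a stationary solution of $\mathbf{D}\,\mathrm{diag}(\mathcal{L}_1,\dots,\mathcal{L}_p)\mathbf{x}(\mathbf{s})=\dot{\boldsymbol{\mathcal{M}}}$. Two such fields with the same operators $\mathcal{L}_1,\dots,\mathcal{L}_p$ and dependence matrices $\mathbf{D}$ and $\hat{\mathbf{D}}$ have equal covariance functions if and only if $\mathbf{D}=\mathbf{Q}\hat{\mathbf{D}}$ for some orthogonal matrix $\mathbf{Q}$. Moreover, for every $\mathbf{D}$ it is always possible to find a triangular matrix $\hat{\mathbf{D}}$ such that the two models have the same covariance functions; in particular $\hat{\mathbf{D}}=\mathrm{chol}(\mathbf{D}^T\mathbf{D})$ is the unique upper-triangular choice with positive diagonal elements.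
   Context: $\Delta$ is the Laplacian on $\mathbb{R}^d$; $(\kappa^2-\Delta)^{\alpha/2}$ is defined via the Fourier transform, $\mathcal{F}((\kappa^2-\Delta)^{\alpha/2}\varphi)(\mathbf{k})=(\kappa^2+\|\mathbf{k}\|^2)^{\alpha/2}\mathcal{F}(\varphi)(\mathbf{k})$, and the SPDE is understood in the weak sense, with only stationary solutions considered. The driving noise $\dot{\boldsymbol{\mathcal{M}}}=(\dot{\mathcal{M}}_1,\dots,\dot{\mathcal{M}}_p)^T$ consists of mutually uncorrelated $L_2$-valued independently scattered random measures with unit variance, $\mathrm{Cov}(\mathcal{M}_i(A),\mathcal{M}_j(B))=\delta_{ij}|A\cap B|$ (the same noise law is used for both fields). For a symmetric positive definite matrix $\mathbf{A}$, $\mathrm{chol}(\mathbf{A})$ denotes the upper-triangular matrix $\mathbf{U}$ with positive diagonal satisfying $\mathbf{U}^T\mathbf{U}=\mathbf{A}$. *)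

theory Defs
  imports "HOL-Analysis.Analysis"
begin

definition matern_pair_density ::
  "('p \<Rightarrow> real) \<Rightarrow> ('p \<Rightarrow> real) \<Rightarrow> 'p \<Rightarrow> 'p \<Rightarrow> real^'d \<Rightarrow> real" where
  "matern_pair_density \<kappa> \<alpha> i j k =
     (\<kappa> i ^ 2 + (norm k)^2) powr (- \<alpha> i / 2) * (\<kappa> j ^ 2 + (norm k)^2) powr (- \<alpha> j / 2)"

text \<open>Cross-covariance between G_i * W and G_j * W for a single unit white noise W, where
  G_i is the Green function of L_i = (kappa_i^2 - Delta)^(alpha_i/2):
  (2 pi)^(-d) times the integral of exp(i k.h) times the pair density over R^d
  (the density is even in k, so only the cosine part survives).\<close>
definition matern_pair_cov ::
  "('p \<Rightarrow> real) \<Rightarrow> ('p \<Rightarrow> real) \<Rightarrow> 'p \<Rightarrow> 'p \<Rightarrow> real^'d \<Rightarrow> real" where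
  "matern_pair_cov \<kappa> \<alpha> i j h =
     (1 / (2 * pi) ^ CARD('d)) *
     (LINT k|lborel. cos (k \<bullet> h) * matern_pair_density \<kappa> \<alpha> i j k)"

text \<open>Matrix covariance function C(h) = E[x(s+h) x(s)^T] of the stationary solution
  x = diag(L_1,...,L_p)^(-1) D^(-1) M of  D diag(L_1,...,L_p) x = M, where M has p mutually
  uncorrelated unit-variance white-noise components:
  C(h)_{ij} = (sum_l (D^-1)_{il} (D^-1)_{jl}) * matern_pair_cov i j h.\<close>
definition matern_spde_cov ::
  "('p::finite \<Rightarrow> real) \<Rightarrow> ('p \<Rightarrow> real) \<Rightarrow> real^'p^'p \<Rightarrow> real^'d \<Rightarrow> real^'p^'p" where
  "matern_spde_cov \<kappa> \<alpha> D h =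
     (\<chi> i j. (matrix_inv D ** transpose (matrix_inv D)) $ i $ j * matern_pair_cov \<kappa> \<alpha> i j h)"

definition upper_triangular :: "real^('p::{finite,linorder})^('p::{finite,linorder}) \<Rightarrow> bool" where
  "upper_triangular U \<longleftrightarrow> (\<forall>i j. j < i \<longrightarrow> U $ i $ j = 0)"

definition lower_triangular :: "real^('p::{finite,linorder})^('p::{finite,linorder}) \<Rightarrow> bool" where
  "lower_triangular U \<longleftrightarrow> (\<forall>i j. i < j \<longrightarrow> U $ i $ j = 0)"

definition chol :: "real^('p::{finite,linorder})^('p::{finite,linorder}) \<Rightarrow> real^('p::{finite,linorder})^('p::{finite,linorder})" where
  "chol A = (THE U. upper_triangular U \<and> (\<forall>i. U $ i $ i > 0) \<and> transpose U ** U = A)"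

end

theory Submission
  imports Defs
begin

lemma integrable_g:
  fixes m s :: real
  assumes m: "m > 0" and s: "2 * s > real CARD('d::finite)"
  shows "integrable lborel (\<lambda>k::real^'d::finite. (m^2 + (norm k)^2) powr (-s))"
proof -
  define g where "g = (\<lambda>k::real^'d. (m^2 + (norm k)^2) powr (-s))"
  define K where "K = max (m powr (-2 * s)) (4 powr s)"
  define r where "r = (4::real) powr (-s)"
  define T where "T = (\<lambda>n::nat. cball (0::real^'d) (2^n))"
  define V where "V = unit_ball_vol (real DIM(real^'d))"
  have sp: "s > 0" using s by simp
  have Kpos: "K > 0" unfolding K_def using m by (simp add: max_def)
  have rpos: "r > 0" unfolding r_def by simp
  have Vnn: "V \<ge> 0" unfolding V_def by simp
  have Tm[measurable]: "T n \<in> sets lborel" for n unfolding T_def by (simp add: borel_closed)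
  have meas: "g \<in> borel_measurable lborel" unfolding g_def by measurable
  have pt: "ennreal (g k) \<le> (\<Sum>n. ennreal (K * r^n) * indicator (T n) k)" for k
  proof -
    have ex: "\<exists>n::nat. norm k \<le> 2^n" proof - obtain n where "norm k < (2::real)^n" using real_arch_pow[of 2 "norm k"] by auto thus ?thesis by (intro exI[of _ n]) simp qed
    define n where "n = (LEAST n::nat. norm k \<le> 2^n)"
    have nk: "norm k \<le> 2^n" unfolding n_def using ex by (rule LeastI_ex)
    have "g k \<le> K * r^n"
    proof (cases n)
      case 0
      have "g k \<le> (m^2) powr (-s)" unfolding g_def
        by (rule powr_mono2') (use sp m in auto)
      also have "\<dots> = m powr (-2 * s)"
      proof -
        have e: "m^2 = m powr 2" using m by (simp add: powr_numeral)
        show ?thesis unfolding e powr_powr by simp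
      qed
      also have "\<dots> \<le> K" unfolding K_def by simp
      finally show ?thesis using 0 by simp
    next
      case (Suc n')
      have "\<not> norm k \<le> 2^n'" unfolding n_def using Suc n_def not_less_Least[of n' "\<lambda>n. norm k \<le> 2^n"] by auto
      hence "(2::real)^n' \<le> norm k" by simp
      hence "((2::real)^n')^2 \<le> (norm k)^2" by (intro power_mono) auto
      moreover have "((2::real)^n')^2 = 4^n'"
      proof -
        have "(4::real)^n' = (2^2)^n'" by simp
        also have "\<dots> = (2^n')^2" by (simp only: power_mult[symmetric] mult.commute)
        finally show ?thesis by simp
      qed
      ultimately have h4: "(4::real)^n' \<le> (norm k)^2" by simp
      have h5: "(4::real)^n' \<le> m^2 + (norm k)^2" using h4 by (intro add_increasing) auto
      have "g k \<le> ((4::real)^n') powr (-s)" unfolding g_def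
        by (rule powr_mono2') (use sp h5 m in auto)
      also have "\<dots> = r^n'" unfolding r_def by (simp add: powr_realpow[symmetric] powr_powr mult.commute)
      also have "\<dots> = 4 powr s * r^n" using Suc unfolding r_def by (simp add: powr_minus)
      also have "\<dots> \<le> K * r^n" unfolding K_def using rpos by (intro mult_right_mono) auto
      finally show ?thesis .
    qed
    moreover have "k \<in> T n" unfolding T_def using nk by simp
    ultimately have "ennreal (g k) \<le> ennreal (K * r^n) * indicator (T n) k" by (simp add: ennreal_leI)
    also have "\<dots> \<le> (\<Sum>n. ennreal (K * r^n) * indicator (T n) k)"
    proof -
      define F where "F = (\<lambda>i. ennreal (K * r^i) * indicator (T i) k)"
      have "sum F {n} \<le> suminf F" by (rule sum_le_suminf) (auto intro: summableI)
      then have "F n \<le> suminf F" by simp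
      then show ?thesis unfolding F_def .
    qed
    finally show ?thesis .
  qed
  have q: "r * 2^DIM(real^'d) < 1"
  proof -
    have e: "(4::real) = 2 powr 2" by simp
    have "(4::real) powr (-s) = 2 powr (-2 * s)" unfolding e powr_powr by simp
    then have "r * 2^DIM(real^'d) = 2 powr (real CARD('d) - 2 * s)"
      unfolding r_def by (simp add: powr_diff powr_realpow[symmetric] powr_minus divide_simps)
    also have "\<dots> < 1" using s by (intro powr_less_one) auto
    finally show ?thesis .
  qed
  have summ: "summable (\<lambda>n. K * V * (r * 2^DIM(real^'d))^n)"
    using q rpos by (intro summable_mult summable_geometric) simp
  have "(\<integral>\<^sup>+k. ennreal (g k) \<partial>lborel) \<le> (\<integral>\<^sup>+k. (\<Sum>n. ennreal (K * r^n) * indicator (T n) k) \<partial>lborel)"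
    by (rule nn_integral_mono) (rule pt)
  also have "\<dots> = (\<Sum>n. \<integral>\<^sup>+k. ennreal (K * r^n) * indicator (T n) k \<partial>lborel)"
    by (rule nn_integral_suminf) measurable
  also have "\<dots> = (\<Sum>n. ennreal (K * r^n) * emeasure lborel (T n))"
    using Tm by (simp add: nn_integral_cmult_indicator)
  also have "\<dots> = (\<Sum>n. ennreal (K * V * (r * 2^DIM(real^'d))^n))"
  proof (rule suminf_cong)
    fix n
    have "((2::real)^n)^DIM(real^'d) = (2^DIM(real^'d))^n" by (simp only: power_mult[symmetric] mult.commute)
    then have e: "K * r^n * (V * (2^n)^DIM(real^'d)) = K*V*(r*2^DIM(real^'d))^n"
      by (simp add: power_mult_distrib mult_ac)
    have "ennreal (K * r^n) * emeasure lborel (T n) = ennreal (K * r^n) * ennreal (V * (2^n)^DIM(real^'d))"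
      unfolding T_def V_def by (simp add: emeasure_cball)
    also have "\<dots> = ennreal (K * r^n * (V * (2^n)^DIM(real^'d)))"
      using Kpos rpos Vnn by (subst ennreal_mult) auto
    finally show "ennreal (K * r^n) * emeasure lborel (T n) = ennreal (K*V*(r*2^DIM(real^'d))^n)"
      unfolding e .
  qed
  also have "\<dots> = ennreal (\<Sum>n. K * V * (r * 2^DIM(real^'d))^n)"
    using summ Kpos rpos Vnn by (intro suminf_ennreal2) auto
  also have "\<dots> < \<infinity>" by simp
  finally have fin: "(\<integral>\<^sup>+k. ennreal (g k) \<partial>lborel) < \<infinity>" .
  show ?thesis unfolding g_def[symmetric]
    by (rule integrableI_nonneg[OF meas _ fin]) (simp add: g_def)
qed


lemma pair_cov_pos:
  fixes \<kappa> \<alpha> :: "'p \<Rightarrow> real"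
  assumes kappa_pos: "\<And>i. \<kappa> i > 0"
    and alpha_gt: "\<And>i. \<alpha> i > real CARD('d::finite) / 2"
  shows "matern_pair_cov \<kappa> \<alpha> i j (0::real^'d) > 0"
proof -
  define f where "f = (\<lambda>k::real^'d. matern_pair_density \<kappa> \<alpha> i j k)"
  define m where "m = min (\<kappa> i) (\<kappa> j)"
  define s where "s = (\<alpha> i + \<alpha> j) / 2"
  have mpos: "m > 0" unfolding m_def using kappa_pos by simp
  have cpos: "real CARD('d) > 0" by simp
  have ai: "\<alpha> i > 0" using alpha_gt[of i] cpos by linarith
  have aj: "\<alpha> j > 0" using alpha_gt[of j] cpos by linarith
  have s2: "2 * s > real CARD('d)" unfolding s_def using alpha_gt[of i] alpha_gt[of j] by simp
  have fpos: "f k > 0" for k unfolding f_def matern_pair_density_def using kappa_pos[of i] kappa_pos[of j]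
    by (intro mult_pos_pos) (auto intro!: add_pos_nonneg)
  have fle: "f k \<le> (m^2 + (norm k)^2) powr (-s)" for k
  proof -
    have mi: "m^2 \<le> (\<kappa> i)^2" unfolding m_def using mpos m_def by (intro power_mono) auto
    have mj: "m^2 \<le> (\<kappa> j)^2" unfolding m_def using mpos m_def by (intro power_mono) auto
    have p: "0 < m^2 + (norm k)^2" using mpos by (intro add_pos_nonneg) auto
    have "(\<kappa> i ^ 2 + (norm k)^2) powr (- \<alpha> i / 2) \<le> (m^2 + (norm k)^2) powr (- \<alpha> i / 2)"
      by (rule powr_mono2') (use ai p mi in auto)
    moreover have "(\<kappa> j ^ 2 + (norm k)^2) powr (- \<alpha> j / 2) \<le> (m^2 + (norm k)^2) powr (- \<alpha> j / 2)"
      by (rule powr_mono2') (use aj p mj in auto)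
    ultimately have "f k \<le> (m^2 + (norm k)^2) powr (- \<alpha> i / 2) * (m^2 + (norm k)^2) powr (- \<alpha> j / 2)"
      unfolding f_def matern_pair_density_def by (intro mult_mono) auto
    also have "\<dots> = (m^2 + (norm k)^2) powr (-s)" unfolding s_def using p
      by (simp add: powr_add[symmetric] add_divide_distrib)
    finally show ?thesis .
  qed
  have fmeas: "f \<in> borel_measurable lborel" unfolding f_def matern_pair_density_def by measurable
  have fint: "integrable lborel f"
  proof (rule Bochner_Integration.integrable_bound[OF integrable_g[OF mpos s2] fmeas])
    show "AE x in lborel. norm (f x) \<le> norm ((m^2 + (norm x)^2) powr (-s))"
      using fle fpos by (auto intro!: AE_I2 simp: less_imp_le order_trans[OF _ abs_ge_self])
  qed
  have nn: "integral\<^sup>L lborel f \<ge> 0" using fpos by (intro integral_nonneg_AE) (auto intro: less_imp_le)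
  have "integral\<^sup>L lborel f \<noteq> 0"
  proof
    assume "integral\<^sup>L lborel f = 0"
    then have "AE x in lborel. f x = 0"
      using integral_nonneg_eq_0_iff_AE[OF fint] fpos by (auto intro: less_imp_le)
    then have "AE x::real^'d in lborel. False"
      by (rule eventually_mono) (metis fpos less_irrefl)
    then have "emeasure lborel {x::real^'d\<in>space lborel. \<not> False} = 0" by (subst (asm) AE_iff_measurable[OF _ refl]) auto
    then show False by simp
  qed
  with nn have ipos: "integral\<^sup>L lborel f > 0" by simp
  have "matern_pair_cov \<kappa> \<alpha> i j (0::real^'d) = (1 / (2 * pi) ^ CARD('d)) * integral\<^sup>L lborel f"
    unfolding matern_pair_cov_def f_def by simp
  also have "\<dots> > 0" using ipos by simp
  finally show ?thesis .
qed

lemma inv_props: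
  fixes D :: "real^'n^'n"
  assumes "invertible D"
  shows "D ** matrix_inv D = mat 1" "matrix_inv D ** D = mat 1"
proof -
  have "D ** matrix_inv D = mat 1 \<and> matrix_inv D ** D = mat 1"
    using assms unfolding invertible_def matrix_inv_def by (rule someI_ex)
  then show "D ** matrix_inv D = mat 1" "matrix_inv D ** D = mat 1" by auto
qed

lemma MD_inv:
  fixes D :: "real^'n^'n"
  assumes "invertible D"
  shows "(matrix_inv D ** transpose (matrix_inv D)) ** (transpose D ** D) = mat 1"
    "(transpose D ** D) ** (matrix_inv D ** transpose (matrix_inv D)) = mat 1"
proof -
  let ?Di = "matrix_inv D"
  have t1: "transpose ?Di ** transpose D = mat 1"
    using inv_props(1)[OF assms] by (metis matrix_transpose_mul transpose_mat)
  have t2: "transpose D ** transpose ?Di = mat 1"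
    using inv_props(2)[OF assms] by (metis matrix_transpose_mul transpose_mat)
  have "(?Di ** transpose ?Di) ** (transpose D ** D) = ?Di ** (transpose ?Di ** transpose D) ** D"
    by (simp add: matrix_mul_assoc)
  also have "\<dots> = mat 1" using t1 inv_props(2)[OF assms] by (simp add: matrix_mul_rid)
  finally show "(?Di ** transpose ?Di) ** (transpose D ** D) = mat 1" .
  have "(transpose D ** D) ** (?Di ** transpose ?Di) = transpose D ** (D ** ?Di) ** transpose ?Di"
    by (simp add: matrix_mul_assoc)
  also have "\<dots> = mat 1" using t2 inv_props(1)[OF assms] by (simp add: matrix_mul_rid)
  finally show "(transpose D ** D) ** (?Di ** transpose ?Di) = mat 1" .
qed

lemma MD_eq_iff:
  fixes D Dh :: "real^'n^'n"
  assumes "invertible D" "invertible Dh"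
  shows "matrix_inv D ** transpose (matrix_inv D) = matrix_inv Dh ** transpose (matrix_inv Dh)
     \<longleftrightarrow> transpose D ** D = transpose Dh ** Dh"
proof
  assume h: "matrix_inv D ** transpose (matrix_inv D) = matrix_inv Dh ** transpose (matrix_inv Dh)"
  have "transpose D ** D = (transpose D ** D) ** ((matrix_inv Dh ** transpose (matrix_inv Dh)) ** (transpose Dh ** Dh))"
    using MD_inv(1)[OF assms(2)] by (simp add: matrix_mul_rid)
  also have "\<dots> = ((transpose D ** D) ** (matrix_inv D ** transpose (matrix_inv D))) ** (transpose Dh ** Dh)"
    using h by (simp add: matrix_mul_assoc)
  also have "\<dots> = transpose Dh ** Dh" using MD_inv(2)[OF assms(1)] by (simp add: matrix_mul_lid)
  finally show "transpose D ** D = transpose Dh ** Dh" .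
next
  assume h: "transpose D ** D = transpose Dh ** Dh"
  have "matrix_inv D ** transpose (matrix_inv D) = (matrix_inv D ** transpose (matrix_inv D)) ** ((transpose Dh ** Dh) ** (matrix_inv Dh ** transpose (matrix_inv Dh)))"
    using MD_inv(2)[OF assms(2)] by (simp add: matrix_mul_rid)
  also have "\<dots> = ((matrix_inv D ** transpose (matrix_inv D)) ** (transpose D ** D)) ** (matrix_inv Dh ** transpose (matrix_inv Dh))"
    using h by (simp add: matrix_mul_assoc)
  also have "\<dots> = matrix_inv Dh ** transpose (matrix_inv Dh)" using MD_inv(1)[OF assms(1)] by (simp add: matrix_mul_lid)
  finally show "matrix_inv D ** transpose (matrix_inv D) = matrix_inv Dh ** transpose (matrix_inv Dh)" .
qed

lemma gram_iff_orth:
  fixes D Dh :: "real^'n^'n"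
  assumes "invertible D" "invertible Dh"
  shows "transpose D ** D = transpose Dh ** Dh \<longleftrightarrow> (\<exists>Q. orthogonal_matrix Q \<and> D = Q ** Dh)"
proof
  assume h: "transpose D ** D = transpose Dh ** Dh"
  define Q where "Q = D ** matrix_inv Dh"
  have "transpose Q ** Q = transpose (matrix_inv Dh) ** (transpose D ** D) ** matrix_inv Dh"
    unfolding Q_def by (simp add: matrix_transpose_mul matrix_mul_assoc)
  also have "\<dots> = transpose (Dh ** matrix_inv Dh) ** (Dh ** matrix_inv Dh)"
    unfolding h by (simp add: matrix_transpose_mul matrix_mul_assoc)
  also have "\<dots> = mat 1" using inv_props(1)[OF assms(2)] by (simp add: matrix_mul_lid)
  finally have "orthogonal_matrix Q" by (simp add: orthogonal_matrix)
  moreover have "D = Q ** Dh" unfolding Q_def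
    using inv_props(2)[OF assms(2)] by (simp add: matrix_mul_assoc[symmetric] matrix_mul_rid)
  ultimately show "\<exists>Q. orthogonal_matrix Q \<and> D = Q ** Dh" by blast
next
  assume "\<exists>Q. orthogonal_matrix Q \<and> D = Q ** Dh"
  then obtain Q where Q: "orthogonal_matrix Q" "D = Q ** Dh" by blast
  have "transpose D ** D = transpose Dh ** (transpose Q ** Q) ** Dh"
    unfolding Q(2) by (simp add: matrix_transpose_mul matrix_mul_assoc)
  also have "\<dots> = transpose Dh ** Dh" using Q(1) by (simp add: orthogonal_matrix matrix_mul_rid)
  finally show "transpose D ** D = transpose Dh ** Dh" .
qed

lemma finite_linorder_induct:
  fixes P :: "'a::{finite,linorder} \<Rightarrow> bool"
  assumes step: "\<And>i. (\<And>k. k < i \<Longrightarrow> P k) \<Longrightarrow> P i"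
  shows "P i"
proof (induct i rule: measure_induct_rule[of "\<lambda>i. card {k. k < i}"])
  case (less x)
  show ?case
  proof (rule step)
    fix k assume "k < x"
    then have "{y. y < k} \<subset> {y. y < x}" by auto
    then have "card {y. y < k} < card {y. y < x}" by (rule psubset_card_mono[rotated]) simp
    then show "P k" by (rule less)
  qed
qed

lemma gram_entry:
  fixes W :: "real^('p::{finite,linorder})^('p::{finite,linorder})"
  assumes "upper_triangular W"
  shows "(transpose W ** W) $ i $ j = (\<Sum>k\<in>{k. k < i}. W$k$i * W$k$j) + W$i$i * W$i$j"
proof -
  have "(transpose W ** W) $ i $ j = (\<Sum>k\<in>UNIV. W$k$i * W$k$j)"
    by (simp add: matrix_matrix_mult_def transpose_def)
  also have "\<dots> = (\<Sum>k\<in>{k. k \<le> i}. W$k$i * W$k$j)"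
    using assms unfolding upper_triangular_def
    by (intro sum.mono_neutral_right) (auto simp: not_le)
  also have "{k. k \<le> i} = insert i {k. k < i}" by auto
  also have "(\<Sum>k\<in>insert i {k. k < i}. W$k$i * W$k$j) = W$i$i * W$i$j + (\<Sum>k\<in>{k. k < i}. W$k$i * W$k$j)"
    by (subst sum.insert) auto
  finally show ?thesis by simp
qed

lemma chol_unique:
  fixes U V :: "real^('p::{finite,linorder})^('p::{finite,linorder})"
  assumes U: "upper_triangular U" "\<And>i. U$i$i > 0"
    and V: "upper_triangular V" "\<And>i. V$i$i > 0"
    and eq: "transpose U ** U = transpose V ** V"
  shows "U = V"
proof -
  have rows: "\<forall>j. U$i$j = V$i$j" for i
  proof (induct i rule: finite_linorder_induct)
    case (1 i)
    have s: "(\<Sum>k\<in>{k. k < i}. U$k$i * U$k$j) = (\<Sum>k\<in>{k. k < i}. V$k$i * V$k$j)" for j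
      using 1 by (intro sum.cong) auto
    have key: "U$i$i * U$i$j = V$i$i * V$i$j" for j
      using gram_entry[OF U(1), of i j] gram_entry[OF V(1), of i j] s[of j] eq by simp
    have "(U$i$i)^2 = (V$i$i)^2" using key[of i] by (simp add: power2_eq_square)
    then have d: "U$i$i = V$i$i" using U(2)[of i] V(2)[of i] by (simp add: power2_eq_iff_nonneg)
    show ?case
    proof
      fix j
      show "U$i$j = V$i$j" using key[of j] d U(2)[of i] by simp
    qed
  qed
  then show ?thesis by (simp add: vec_eq_iff)
qed


lemma QR:
  fixes D :: "real^('p::{finite,linorder})^('p::{finite,linorder})"
  assumes inv: "invertible D"
  shows "\<exists>Q R. orthogonal_matrix Q \<and> D = Q ** R \<and> upper_triangular R \<and> (\<forall>i. R$i$i > 0)"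
proof -
  define c where "c = (\<lambda>j. column j D)"
  define W where "W = (\<lambda>j. span (c ` {i. i < j}))"
  define V where "V = (\<lambda>j. span (c ` {i. i \<le> j}))"
  have notin: "c j \<notin> W j" for j
  proof
    assume a: "c j \<in> W j"
    have "c ` {i. i < j} = (\<lambda>x. D *v x) ` ((\<lambda>i. axis i 1) ` {i. i < j})"
      by (simp add: image_image c_def matrix_vector_mult_basis)
    then have "W j = (\<lambda>x. D *v x) ` span ((\<lambda>i. axis i 1) ` {i. i < j})"
      unfolding W_def by (simp add: span_linear_image)
    then obtain x where x: "x \<in> span ((\<lambda>i. axis i 1) ` {i. i<j})" "c j = D *v x" using a by auto
    have "D *v x = D *v axis j 1" using x(2) by (simp add: c_def matrix_vector_mult_basis)
    then have "x = axis j 1" using inj_matrix_vector_mult[OF inv] by (auto dest: injD)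
    moreover have "x $ j = 0"
      by (rule span_induct[OF x(1), of "\<lambda>v. v$j = 0"]) (auto simp: subspace_def axis_def)
    ultimately show False by (simp add: axis_def)
  qed
  have "\<forall>j. \<exists>y z. y \<in> W j \<and> (\<forall>w\<in>W j. orthogonal z w) \<and> c j = y + z"
  proof
    fix j
    obtain y z where "y \<in> span (c ` {i. i<j})" "\<And>w. w \<in> span (c ` {i. i<j}) \<Longrightarrow> orthogonal z w" "c j = y + z"
      using orthogonal_subspace_decomp_exists[of "c ` {i. i<j}" "c j"] by blast
    then show "\<exists>y z. y \<in> W j \<and> (\<forall>w\<in>W j. orthogonal z w) \<and> c j = y + z" unfolding W_def by blast
  qed
  then obtain y z where yW: "\<And>j. y j \<in> W j" and zW: "\<And>j. \<forall>w\<in>W j. orthogonal (z j) w"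
    and cyz: "\<And>j. c j = y j + z j" by metis
  have z0: "z j \<noteq> 0" for j using notin[of j] yW[of j] cyz[of j] by auto
  define e where "e = (\<lambda>j. (1 / norm (z j)) *\<^sub>R z j)"
  have ne: "norm (e j) = 1" for j by (simp add: e_def z0)
  have WV: "W j \<subseteq> V j" for j unfolding W_def V_def by (intro span_mono) auto
  have zV: "z j \<in> V j" for j
  proof -
    have "c j \<in> V j" unfolding V_def by (intro span_base) auto
    moreover have "y j \<in> V j" using yW WV by blast
    ultimately have "c j - y j \<in> V j" unfolding V_def by (rule span_diff)
    then show ?thesis using cyz[of j] by (simp add: algebra_simps)
  qed
  have eV: "e j \<in> V j" for j unfolding e_def V_def using zV[of j] unfolding V_def by (rule span_mul)
  have VW: "V i \<subseteq> W j" if "i < j" for i j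
    unfolding V_def W_def using that by (intro span_mono) auto
  have orth_ez: "orthogonal (z j) (e i)" if "i < j" for i j using zW eV VW that by blast
  have orth1: "orthogonal (e j) (e i)" if "i < j" for i j
    using orth_ez[OF that] unfolding orthogonal_def e_def by auto
  have orth: "orthogonal (e i) (e j)" if "i \<noteq> j" for i j
  proof (cases "i < j")
    case True then show ?thesis using orth1 by (simp add: orthogonal_commute)
  next
    case False then have "j < i" using that by simp
    then show ?thesis using orth1 by simp
  qed
  define Q where "Q = (\<chi> a b. e b $ a)"
  have colQ: "column b Q = e b" for b unfolding Q_def column_def by (simp add: vec_eq_iff)
  have oQ: "orthogonal_matrix Q" unfolding orthogonal_matrix_orthonormal_columns colQ using ne orth by auto
  define R where "R = transpose Q ** D"
  have Rij: "R $ i $ j = e i \<bullet> c j" for i j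
  proof -
    have "R $ i $ j = column i Q \<bullet> column j D"
      by (simp add: R_def matrix_matrix_mult_def transpose_def inner_vec_def column_def)
    then show ?thesis by (simp add: colQ c_def)
  qed
  have up: "upper_triangular R" unfolding upper_triangular_def
  proof (intro allI impI)
    fix i j :: 'p assume "j < i"
    then have "c j \<in> W i" unfolding W_def by (intro span_base) auto
    then have "orthogonal (z i) (c j)" using zW by blast
    then show "R $ i $ j = 0" unfolding Rij e_def orthogonal_def by simp
  qed
  have diag: "R $ j $ j > 0" for j
  proof -
    have "orthogonal (z j) (y j)" using zW yW by blast
    then have "R $ j $ j = (1 / norm (z j)) * (z j \<bullet> z j)"
      unfolding Rij e_def cyz[of j] orthogonal_def by (simp add: inner_add_right)
    also have "\<dots> = norm (z j)" using z0[of j] by (simp add: power2_norm_eq_inner[symmetric] power2_eq_square)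
    finally show ?thesis using z0[of j] by simp
  qed
  have "Q ** R = (Q ** transpose Q) ** D" unfolding R_def by (simp add: matrix_mul_assoc)
  also have "\<dots> = D" using oQ unfolding orthogonal_matrix_def by simp
  finally show ?thesis using oQ up diag by metis
qed

theorem proposition2:
  fixes \<kappa> \<alpha> :: "'p::{finite,linorder} \<Rightarrow> real"
    and D :: "real^('p::{finite,linorder})^('p::{finite,linorder})"
  assumes kappa_pos: "\<And>i. \<kappa> i > 0"
    and alpha_gt: "\<And>i. \<alpha> i > real CARD('d::finite) / 2"
    and D_inv: "invertible D"
  shows "(\<forall>Dh. invertible Dh \<longrightarrow>
            ((\<forall>h::real^('d::finite). matern_spde_cov \<kappa> \<alpha> D h = matern_spde_cov \<kappa> \<alpha> Dh h)
             \<longleftrightarrow> (\<exists>Q. orthogonal_matrix Q \<and> D = Q ** Dh)))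
       \<and> (\<exists>Dh. invertible Dh \<and> (upper_triangular Dh \<or> lower_triangular Dh) \<and>
            (\<forall>h::real^('d::finite). matern_spde_cov \<kappa> \<alpha> D h = matern_spde_cov \<kappa> \<alpha> Dh h))
       \<and> (\<forall>Dh.
            (invertible Dh \<and> upper_triangular Dh \<and> (\<forall>i. Dh $ i $ i > 0) \<and>
             (\<forall>h::real^('d::finite). matern_spde_cov \<kappa> \<alpha> D h = matern_spde_cov \<kappa> \<alpha> Dh h))
            \<longleftrightarrow> Dh = chol (transpose D ** D))"
proof -
  have cov_iff: "(\<forall>h::real^'d. matern_spde_cov \<kappa> \<alpha> D h = matern_spde_cov \<kappa> \<alpha> Dh h)
      \<longleftrightarrow> transpose D ** D = transpose Dh ** Dh" if Dh: "invertible Dh" for Dh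
  proof
    assume h: "\<forall>h::real^'d. matern_spde_cov \<kappa> \<alpha> D h = matern_spde_cov \<kappa> \<alpha> Dh h"
    have "matrix_inv D ** transpose (matrix_inv D) = matrix_inv Dh ** transpose (matrix_inv Dh)"
      unfolding vec_eq_iff
    proof (intro allI)
      fix i j
      have "matern_spde_cov \<kappa> \<alpha> D (0::real^'d) $ i $ j = matern_spde_cov \<kappa> \<alpha> Dh (0::real^'d) $ i $ j"
        using h by simp
      then have "(matrix_inv D ** transpose (matrix_inv D)) $ i $ j * matern_pair_cov \<kappa> \<alpha> i j (0::real^'d)
          = (matrix_inv Dh ** transpose (matrix_inv Dh)) $ i $ j * matern_pair_cov \<kappa> \<alpha> i j (0::real^'d)"
        unfolding matern_spde_cov_def by simp
      moreover have "matern_pair_cov \<kappa> \<alpha> i j (0::real^'d) > 0"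
        by (rule pair_cov_pos[OF kappa_pos alpha_gt])
      ultimately show "(matrix_inv D ** transpose (matrix_inv D)) $ i $ j = (matrix_inv Dh ** transpose (matrix_inv Dh)) $ i $ j"
        by simp
    qed
    then show "transpose D ** D = transpose Dh ** Dh" using MD_eq_iff[OF D_inv Dh] by simp
  next
    assume "transpose D ** D = transpose Dh ** Dh"
    then have "matrix_inv D ** transpose (matrix_inv D) = matrix_inv Dh ** transpose (matrix_inv Dh)"
      using MD_eq_iff[OF D_inv Dh] by simp
    then show "\<forall>h::real^'d. matern_spde_cov \<kappa> \<alpha> D h = matern_spde_cov \<kappa> \<alpha> Dh h"
      by (simp add: matern_spde_cov_def)
  qed
  have part1: "\<forall>Dh. invertible Dh \<longrightarrow>
            ((\<forall>h::real^'d. matern_spde_cov \<kappa> \<alpha> D h = matern_spde_cov \<kappa> \<alpha> Dh h)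
             \<longleftrightarrow> (\<exists>Q. orthogonal_matrix Q \<and> D = Q ** Dh))"
    using cov_iff gram_iff_orth[OF D_inv] by blast
  obtain Q R where QR: "orthogonal_matrix Q" "D = Q ** R" "upper_triangular R" "\<And>i. R$i$i > 0"
    using QR[OF D_inv] by blast
  have RQ: "R = transpose Q ** D"
  proof -
    have "transpose Q ** D = (transpose Q ** Q) ** R" using QR(2) by (simp add: matrix_mul_assoc)
    also have "\<dots> = R" using QR(1) by (simp add: orthogonal_matrix_def)
    finally show ?thesis by simp
  qed
  have invQt: "invertible (transpose Q)" using QR(1) unfolding orthogonal_matrix_def invertible_def
    by auto
  have R_inv: "invertible R" unfolding RQ by (rule invertible_mult[OF invQt D_inv])
  have gramR: "transpose D ** D = transpose R ** R"
    using gram_iff_orth[OF D_inv R_inv] QR by blast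
  have covR: "\<forall>h::real^'d. matern_spde_cov \<kappa> \<alpha> D h = matern_spde_cov \<kappa> \<alpha> R h"
    using cov_iff[OF R_inv] gramR by simp
  have chol_eq: "chol (transpose D ** D) = R"
    unfolding chol_def
  proof (rule the_equality)
    show "upper_triangular R \<and> (\<forall>i. R $ i $ i > 0) \<and> transpose R ** R = transpose D ** D"
      using QR gramR by simp
  next
    fix U assume "upper_triangular U \<and> (\<forall>i. U $ i $ i > 0) \<and> transpose U ** U = transpose D ** D"
    then show "U = R" using chol_unique[of U R] QR gramR by auto
  qed
  have part3: "\<forall>Dh.
            (invertible Dh \<and> upper_triangular Dh \<and> (\<forall>i. Dh $ i $ i > 0) \<and>
             (\<forall>h::real^'d. matern_spde_cov \<kappa> \<alpha> D h = matern_spde_cov \<kappa> \<alpha> Dh h))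
            \<longleftrightarrow> Dh = chol (transpose D ** D)"
  proof (intro allI iffI)
    fix Dh assume a: "invertible Dh \<and> upper_triangular Dh \<and> (\<forall>i. Dh $ i $ i > 0) \<and>
             (\<forall>h::real^'d. matern_spde_cov \<kappa> \<alpha> D h = matern_spde_cov \<kappa> \<alpha> Dh h)"
    then have "transpose Dh ** Dh = transpose R ** R" using cov_iff[of Dh] gramR by simp
    then show "Dh = chol (transpose D ** D)" unfolding chol_eq using chol_unique[of Dh R] a QR by auto
  next
    fix Dh assume "Dh = chol (transpose D ** D)"
    then have "Dh = R" using chol_eq by simp
    then show "invertible Dh \<and> upper_triangular Dh \<and> (\<forall>i. Dh $ i $ i > 0) \<and>
             (\<forall>h::real^'d. matern_spde_cov \<kappa> \<alpha> D h = matern_spde_cov \<kappa> \<alpha> Dh h)"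
      using R_inv QR covR by simp
  qed
  show ?thesis using part1 part3 R_inv QR(3) covR by blast
qed

end
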